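(* Let $F,G\in\mathbb{A}$ and $\tilde H\in\mathbb{A}_q$ be as in the BQTRU key setting below, so that $\tilde H\equiv F^{-1}\circ G+\vartheta\pmod q$. Let $$\chi=\{\tau'\in\mathbb{A}: \exists F'\in\mathbb{A},\ \exists\alpha'\in\mathbb{A}\ \text{with}\ F\circ F'=F'\circ F\equiv 1+\alpha'\circ\tau'\!\!\pmod q\ \text{and}\ \tilde H\equiv F'\circ G+\tau'\!\!\pmod q\}.$$ Then for every $\tau'\in\chi$ with $\tau'\neq\vartheta$, $\|\overrightarrow{\rho(\tau')}\|_H>4|T|$.
   Context: Setting: $n$ prime, $p,q$ distinct primes with $\gcd(p,q)=\gcd(n,q)=1$ and $n\mid(q-1)$. $R'=\mathbb{Z}[x,y]/\langle x^n-1,y^n-1\rangle$, $R'_q=\mathbb{Z}_q[x,y]/\langle x^n-1,y^n-1\rangle$; $\mathbb{A},\mathbb{A}_q,\mathbb{L}_q$ are the quaternion algebras over $R'$, $R'_q$, $\mathbb{Z}_q$ (free module on $1,i,j,k$, scalars central, $i^2=j^2=1$, $i\circ j=-j\circ i=k$); "$\pmod q$" means equality after reducing coefficients mod $q$. $E=\{(a,b)\in\mathbb{Z}_q^2:a^n=b^n=1\}$, enumerated $(a_1,b_1),\dots,(a_{n^2},b_{n^2})$; $\lambda_{a,b}(x,y)=\frac{ab}{n^2}\cdot\frac{x^n-1}{x-a}\cdot\frac{y^n-1}{y-b}$ over $\mathbb{Z}_q$. For $F\in\mathbb{A}$ (reduced mod $q$) and $(a,b)\in E$, $F(a,b)\in\mathbb{L}_q$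 is componentwise evaluation, and $\overrightarrow{\rho(F)}\in\mathbb{Z}_q^{4n^2}$ is the vector $(\rho(f_0),\rho(f_1),\rho(f_2),\rho(f_3))$ with $\rho(f_t)=(f_t(a_1,b_1),\dots,f_t(a_{n^2},b_{n^2}))$; $\|\cdot\|_H$ is the Hamming weight (number of nonzero coordinates). Key setting: $G=g_0+g_1i+g_2j+g_3k$ and $F=f_0+f_1i+f_2j+f_3k$ with all $f_t,g_t$ ternary (coefficients in $\{-1,0,1\}$); $T=\bigcap_{t=0}^3\{(a,b)\in E: g_t(a,b)=0\}\ne\emptyset$, with the enumeration chosen so that $T=\{(a_1,b_1),\dots,(a_{|T|},b_{|T|})\}$; $\{(a,b)\in E: N(F)(a,b)=0\}\subseteq T$ where $N(F)=f_0^2-f_1^2-f_2^2-f_3^2$. $\sigma=\sum_{i=1}^{|T|}q_i\lambda_{a_i,b_i}$ with $q_i\in\mathbb{Z}_q$ nonzero; $Q=\langle q,\sigma\rangle\subseteq R'$, $J=Q+Qi+Qj+Qk$; $F^{-1}\in\mathbb{A}$ satisfies $F\circ F^{-1}=F^{-1}\circ F\equiv 1\pmod J$. $W=w_0+w_1i+w_2j+w_3k\in\mathbb{L}_q$ is invertible with $w_0,w_1,w_2,w_3\ne0$; $\vartheta=W\circ\sigma$, and $\tilde H\equiv F^{-1}\circ G+\vartheta\pmod q$. *)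

theory Defs
  imports "HOL-Number_Theory.Number_Theory"
begin

text \<open>Elements of R' = Z[x,y]/(x^n-1,y^n-1) are represented by their coefficient arrays
  f :: nat => nat => int, where f k l is the coefficient of x^k y^l; only indices k,l < n
  are meaningful (all operations below only read those).  Elements of R'_q are represented
  by integer representatives, with equality taken modulo q.\<close>

type_synonym rpoly = "nat \<Rightarrow> nat \<Rightarrow> int"

definition padd :: "rpoly \<Rightarrow> rpoly \<Rightarrow> rpoly" where
  "padd f g = (\<lambda>k l. f k l + g k l)"

definition psub :: "rpoly \<Rightarrow> rpoly \<Rightarrow> rpoly" where
  "psub f g = (\<lambda>k l. f k l - g k l)"

definition psmult :: "int \<Rightarrow> rpoly \<Rightarrow> rpoly" where
  "psmult c f = (\<lambda>k l. c * f k l)"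

text \<open>Multiplication in R' (cyclic convolution, since x^n = y^n = 1).\<close>
definition pmul :: "nat \<Rightarrow> rpoly \<Rightarrow> rpoly \<Rightarrow> rpoly" where
  "pmul n f g = (\<lambda>k l. \<Sum>i<n. \<Sum>j<n. f i j * g ((k + n - i) mod n) ((l + n - j) mod n))"

definition pconst :: "int \<Rightarrow> rpoly" where
  "pconst c = (\<lambda>k l. if k = 0 \<and> l = 0 then c else 0)"

definition peq_mod :: "nat \<Rightarrow> nat \<Rightarrow> rpoly \<Rightarrow> rpoly \<Rightarrow> bool" where
  "peq_mod n q f g \<longleftrightarrow> (\<forall>k<n. \<forall>l<n. [f k l = g k l] (mod int q))"

definition ternary :: "nat \<Rightarrow> rpoly \<Rightarrow> bool" where
  "ternary n f \<longleftrightarrow> (\<forall>k<n. \<forall>l<n. f k l \<in> {-1, 0, 1})"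

definition peval :: "nat \<Rightarrow> rpoly \<Rightarrow> int \<Rightarrow> int \<Rightarrow> int" where
  "peval n f a b = (\<Sum>k<n. \<Sum>l<n. f k l * a ^ k * b ^ l)"

datatype 'a quat = Quat 'a 'a 'a 'a

fun qc :: "'a quat \<Rightarrow> nat \<Rightarrow> 'a" where
  "qc (Quat a0 a1 a2 a3) t = (if t = 0 then a0 else if t = 1 then a1 else if t = 2 then a2 else a3)"

text \<open>Multiplication in the quaternion algebra over R' with i^2 = j^2 = 1, ij = -ji = k
  (hence k^2 = -1, ik = j, ki = -j, jk = -i, kj = i).\<close>
fun qmul :: "nat \<Rightarrow> rpoly quat \<Rightarrow> rpoly quat \<Rightarrow> rpoly quat" where
  "qmul n (Quat a0 a1 a2 a3) (Quat b0 b1 b2 b3) =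
     Quat (psub (padd (padd (pmul n a0 b0) (pmul n a1 b1)) (pmul n a2 b2)) (pmul n a3 b3))
          (psub (padd (padd (pmul n a0 b1) (pmul n a1 b0)) (pmul n a3 b2)) (pmul n a2 b3))
          (psub (padd (padd (pmul n a0 b2) (pmul n a2 b0)) (pmul n a1 b3)) (pmul n a3 b1))
          (psub (padd (padd (pmul n a0 b3) (pmul n a3 b0)) (pmul n a1 b2)) (pmul n a2 b1))"

fun qadd :: "rpoly quat \<Rightarrow> rpoly quat \<Rightarrow> rpoly quat" where
  "qadd (Quat a0 a1 a2 a3) (Quat b0 b1 b2 b3) = Quat (padd a0 b0) (padd a1 b1) (padd a2 b2) (padd a3 b3)"

definition qone :: "rpoly quat" where
  "qone = Quat (pconst 1) (pconst 0) (pconst 0) (pconst 0)"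

definition qscal :: "rpoly \<Rightarrow> rpoly quat" where
  "qscal s = Quat s (pconst 0) (pconst 0) (pconst 0)"

fun qconst :: "int quat \<Rightarrow> rpoly quat" where
  "qconst (Quat w0 w1 w2 w3) = Quat (pconst w0) (pconst w1) (pconst w2) (pconst w3)"

definition qeq_mod :: "nat \<Rightarrow> nat \<Rightarrow> rpoly quat \<Rightarrow> rpoly quat \<Rightarrow> bool" where
  "qeq_mod n q A B \<longleftrightarrow> (\<forall>t<4. peq_mod n q (qc A t) (qc B t))"

definition qternary :: "nat \<Rightarrow> rpoly quat \<Rightarrow> bool" where
  "qternary n A \<longleftrightarrow> (\<forall>t<4. ternary n (qc A t))"

fun lmul :: "int quat \<Rightarrow> int quat \<Rightarrow> int quat" where
  "lmul (Quat a0 a1 a2 a3) (Quat b0 b1 b2 b3) =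
     Quat (a0*b0 + a1*b1 + a2*b2 - a3*b3)
          (a0*b1 + a1*b0 + a3*b2 - a2*b3)
          (a0*b2 + a2*b0 + a1*b3 - a3*b1)
          (a0*b3 + a3*b0 + a1*b2 - a2*b1)"

definition leq_mod :: "nat \<Rightarrow> int quat \<Rightarrow> int quat \<Rightarrow> bool" where
  "leq_mod q A B \<longleftrightarrow> (\<forall>t<4. [qc A t = qc B t] (mod int q))"

definition linvertible :: "nat \<Rightarrow> int quat \<Rightarrow> bool" where
  "linvertible q W \<longleftrightarrow> (\<exists>V. leq_mod q (lmul W V) (Quat 1 0 0 0) \<and> leq_mod q (lmul V W) (Quat 1 0 0 0))"

definition Eset :: "nat \<Rightarrow> nat \<Rightarrow> (int \<times> int) set" where
  "Eset n q = {(a, b). a \<in> {0..<int q} \<and> b \<in> {0..<int q} \<and>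
                        [a ^ n = 1] (mod int q) \<and> [b ^ n = 1] (mod int q)}"

definition Tset :: "nat \<Rightarrow> nat \<Rightarrow> rpoly quat \<Rightarrow> (int \<times> int) set" where
  "Tset n q G = {(a, b) \<in> Eset n q. \<forall>t<4. [peval n (qc G t) a b = 0] (mod int q)}"

fun qnorm :: "nat \<Rightarrow> rpoly quat \<Rightarrow> rpoly" where
  "qnorm n (Quat f0 f1 f2 f3) =
     psub (psub (psub (pmul n f0 f0) (pmul n f1 f1)) (pmul n f2 f2)) (pmul n f3 f3)"

text \<open>lambda_{a,b} = (ab/n^2) ((x^n-1)/(x-a)) ((y^n-1)/(y-b)) over Z_q, using
  (x^n-1)/(x-a) = sum_{k<n} a^(n-1-k) x^k.  Coefficients reduced into {0..q-1}.\<close>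
definition lam :: "nat \<Rightarrow> nat \<Rightarrow> int \<Rightarrow> int \<Rightarrow> rpoly" where
  "lam n q a b = (\<lambda>k l. (a * b * (modular_inverse (int q) (int n))^2 * a ^ (n - 1 - k) * b ^ (n - 1 - l))
                         mod int q)"

text \<open>sigma = sum over (a_i,b_i) in T of q_i lambda_{a_i,b_i}; the coefficients q_i are given by c.\<close>
definition sigma :: "nat \<Rightarrow> nat \<Rightarrow> (int \<times> int) set \<Rightarrow> (int \<times> int \<Rightarrow> int) \<Rightarrow> rpoly" where
  "sigma n q T c = (\<lambda>k l. (\<Sum>(a, b)\<in>T. c (a, b) * lam n q a b k l) mod int q)"

text \<open>Membership in the ideal Q = <q, sigma> of R', and in J = Q + Qi + Qj + Qk.\<close>
definition inQ :: "nat \<Rightarrow> nat \<Rightarrow> rpoly \<Rightarrow> rpoly \<Rightarrow> bool" where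
  "inQ n q s f \<longleftrightarrow> (\<exists>r1 r2. \<forall>k<n. \<forall>l<n. f k l = int q * r1 k l + pmul n r2 s k l)"

definition qeq_modJ :: "nat \<Rightarrow> nat \<Rightarrow> rpoly \<Rightarrow> rpoly quat \<Rightarrow> rpoly quat \<Rightarrow> bool" where
  "qeq_modJ n q s A B \<longleftrightarrow> (\<forall>t<4. inQ n q s (psub (qc A t) (qc B t)))"

text \<open>Hamming weight of rho(F) in Z_q^{4 n^2}.\<close>
definition rho_weight :: "nat \<Rightarrow> nat \<Rightarrow> rpoly quat \<Rightarrow> nat" where
  "rho_weight n q A = card {(t, e). t < (4::nat) \<and> e \<in> Eset n q \<and>
                                    \<not> [peval n (qc A t) (fst e) (snd e) = 0] (mod int q)}"

end

theory Submission imports Defs begin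

lemma peval_cong:
  assumes "\<forall>k<n. \<forall>l<n. [f k l = g k l] (mod M)"
  shows "[peval n f a b = peval n g a b] (mod M)"
  unfolding peval_def using assms by (intro cong_sum cong_mult cong_refl) auto

lemma peval_padd: "peval n (padd f g) a b = peval n f a b + peval n g a b"
  unfolding peval_def padd_def by (simp add: sum.distrib algebra_simps)

lemma peval_psub: "peval n (psub f g) a b = peval n f a b - peval n g a b"
  unfolding peval_def psub_def by (simp add: sum_subtractf algebra_simps)

lemma peval_pconst: assumes "n > 0" shows "peval n (pconst c) a b = c"
proof -
  have "peval n (pconst c) a b = (\<Sum>k<n. if k = 0 then c else 0)"
    unfolding peval_def
  proof (rule sum.cong[OF refl])
    fix k assume "k \<in> {..<n}"
    show "(\<Sum>l<n. pconst c k l * a ^ k * b ^ l) = (if k = 0 then c else 0)"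
    proof (cases "k = 0")
      case True
      have "(\<Sum>l<n. pconst c k l * a ^ k * b ^ l) = (\<Sum>l<n. if l = 0 then c else 0)"
        using True by (intro sum.cong) (auto simp: pconst_def)
      also have "\<dots> = c" using assms by (simp add: sum.delta')
      finally show ?thesis using True by simp
    qed (simp add: pconst_def)
  qed
  also have "\<dots> = c" using assms by (simp add: sum.delta')
  finally show ?thesis .
qed

lemma pow_mod_n:
  fixes a :: int
  assumes "[a ^ n = 1] (mod M)"
  shows "[a ^ x = a ^ (x mod n)] (mod M)"
proof -
  have "a ^ x = a ^ (n * (x div n) + x mod n)" by simp
  also have "\<dots> = (a ^ n) ^ (x div n) * a ^ (x mod n)"
    by (simp only: power_add power_mult)
  also have "[\<dots> = 1 ^ (x div n) * a ^ (x mod n)] (mod M)"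
    by (intro cong_mult cong_pow assms cong_refl)
  finally show ?thesis by simp
qed

lemma shift1:
  fixes a :: int and h :: "nat \<Rightarrow> int"
  assumes "[a ^ n = 1] (mod M)" "i < n"
  shows "[(\<Sum>k<n. h ((k + n - i) mod n) * a ^ k) = a ^ i * (\<Sum>k<n. h k * a ^ k)] (mod M)"
proof -
  define \<phi> where "\<phi> k = (k + n - i) mod n" for k
  have n0: "n > 0" using assms by auto
  have bij: "bij_betw \<phi> {..<n} {..<n}"
  proof (rule bij_betw_byWitness[where f'="\<lambda>k. (k + i) mod n"])
    show "\<forall>k\<in>{..<n}. (\<phi> k + i) mod n = k"
    proof
      fix k assume "k \<in> {..<n}"
      hence "(\<phi> k + i) mod n = (k + n - i + i) mod n" unfolding \<phi>_def by (simp add: mod_add_left_eq)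
      also have "\<dots> = (k + n) mod n" using assms by simp
      finally show "(\<phi> k + i) mod n = k" using \<open>k \<in> _\<close> by simp
    qed
    show "\<forall>k\<in>{..<n}. \<phi> ((k + i) mod n) = k"
    proof
      fix k assume "k \<in> {..<n}"
      have "\<phi> ((k + i) mod n) = ((k + i) mod n + (n - i)) mod n" unfolding \<phi>_def using assms
        by (simp add: add.assoc)
      also have "\<dots> = (k + i + (n - i)) mod n" by (simp add: mod_add_left_eq)
      also have "\<dots> = (k + n) mod n" using assms by simp
      finally show "\<phi> ((k + i) mod n) = k" using \<open>k \<in> _\<close> by simp
    qed
  qed (use n0 in \<open>auto simp: \<phi>_def\<close>)
  have "[(\<Sum>k<n. h (\<phi> k) * a ^ k) = (\<Sum>k<n. h (\<phi> k) * (a ^ i * a ^ \<phi> k))] (mod M)"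
  proof (intro cong_sum cong_mult cong_refl)
    fix k assume k: "k \<in> {..<n}"
    have e: "(\<phi> k + i) mod n = k" 
    proof -
      have "(\<phi> k + i) mod n = (k + n - i + i) mod n" unfolding \<phi>_def by (simp add: mod_add_left_eq)
      also have "\<dots> = (k + n) mod n" using assms by simp
      finally show ?thesis using k by simp
    qed
    have "[a ^ (\<phi> k + i) = a ^ ((\<phi> k + i) mod n)] (mod M)" by (rule pow_mod_n[OF assms(1)])
    hence "[a ^ (\<phi> k + i) = a ^ k] (mod M)" using e by simp
    thus "[a ^ k = a ^ i * a ^ \<phi> k] (mod M)" by (simp add: power_add cong_sym mult.commute)
  qed
  also have "(\<Sum>k<n. h (\<phi> k) * (a ^ i * a ^ \<phi> k)) = a ^ i * (\<Sum>k<n. h (\<phi> k) * a ^ \<phi> k)"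
    by (simp add: sum_distrib_left mult_ac)
  also have "(\<Sum>k<n. h (\<phi> k) * a ^ \<phi> k) = (\<Sum>k<n. h k * a ^ k)"
    using sum.reindex_bij_betw[OF bij, of "\<lambda>k. h k * a ^ k"] by simp
  finally show ?thesis unfolding \<phi>_def .
qed

lemma pmul_swap:
  fixes X :: "nat \<Rightarrow> nat \<Rightarrow> nat \<Rightarrow> nat \<Rightarrow> int"
  shows "(\<Sum>k<n. \<Sum>l<m. (\<Sum>i<n'. \<Sum>j<m'. X i j k l) * a k * b l)
       = (\<Sum>i<n'. \<Sum>j<m'. \<Sum>k<n. \<Sum>l<m. X i j k l * a k * b l)"
proof -
  have "(\<Sum>k<n. \<Sum>l<m. (\<Sum>i<n'. \<Sum>j<m'. X i j k l) * a k * b l)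
      = (\<Sum>k<n. \<Sum>l<m. \<Sum>i<n'. \<Sum>j<m'. X i j k l * a k * b l)"
    by (simp only: sum_distrib_right)
  also have "\<dots> = (\<Sum>k<n. \<Sum>i<n'. \<Sum>l<m. \<Sum>j<m'. X i j k l * a k * b l)"
    by (rule sum.cong[OF refl], rule sum.swap)
  also have "\<dots> = (\<Sum>i<n'. \<Sum>k<n. \<Sum>l<m. \<Sum>j<m'. X i j k l * a k * b l)"
    by (rule sum.swap)
  also have "\<dots> = (\<Sum>i<n'. \<Sum>k<n. \<Sum>j<m'. \<Sum>l<m. X i j k l * a k * b l)"
    by (rule sum.cong[OF refl], rule sum.cong[OF refl], rule sum.swap)
  also have "\<dots> = (\<Sum>i<n'. \<Sum>j<m'. \<Sum>k<n. \<Sum>l<m. X i j k l * a k * b l)"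
    by (rule sum.cong[OF refl], rule sum.swap)
  finally show ?thesis .
qed

lemma cong_eq_chain: "A = B \<Longrightarrow> [B = C] (mod M) \<Longrightarrow> C = D \<Longrightarrow> [A = D] (mod M)"
  by simp

lemma shift2:
  fixes a b :: int
  assumes "[a ^ n = 1] (mod M)" "[b ^ n = 1] (mod M)" "i < n" "j < n"
  shows "[(\<Sum>k<n. \<Sum>l<n. g ((k + n - i) mod n) ((l + n - j) mod n) * a ^ k * b ^ l)
          = a ^ i * b ^ j * peval n g a b] (mod M)"
proof -
  have e1: "(\<Sum>k<n. \<Sum>l<n. g ((k + n - i) mod n) ((l + n - j) mod n) * a ^ k * b ^ l)
      = (\<Sum>k<n. a ^ k * (\<Sum>l<n. g ((k + n - i) mod n) ((l + n - j) mod n) * b ^ l))"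
    by (simp add: sum_distrib_left mult_ac)
  have c2: "[(\<Sum>k<n. a ^ k * (\<Sum>l<n. g ((k + n - i) mod n) ((l + n - j) mod n) * b ^ l))
       = (\<Sum>k<n. a ^ k * (b ^ j * (\<Sum>l<n. g ((k + n - i) mod n) l * b ^ l)))] (mod M)"
  proof (rule cong_sum, rule cong_mult[OF cong_refl])
    fix k
    show "[(\<Sum>l<n. g ((k + n - i) mod n) ((l + n - j) mod n) * b ^ l)
       = b ^ j * (\<Sum>l<n. g ((k + n - i) mod n) l * b ^ l)] (mod M)"
      by (rule shift1[where h="g ((k + n - i) mod n)", OF assms(2,4)])
  qed
  have e3: "(\<Sum>k<n. a ^ k * (b ^ j * (\<Sum>l<n. g ((k + n - i) mod n) l * b ^ l)))
      = b ^ j * (\<Sum>k<n. (\<Sum>l<n. g ((k + n - i) mod n) l * b ^ l) * a ^ k)"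
    by (simp add: sum_distrib_left mult_ac)
  have c4: "[b ^ j * (\<Sum>k<n. (\<Sum>l<n. g ((k + n - i) mod n) l * b ^ l) * a ^ k)
     = b ^ j * (a ^ i * (\<Sum>k<n. (\<Sum>l<n. g k l * b ^ l) * a ^ k))] (mod M)"
    by (rule cong_mult[OF cong_refl shift1[where h="\<lambda>k'. \<Sum>l<n. g k' l * b ^ l", OF assms(1,3)]])
  have e5: "b ^ j * (a ^ i * (\<Sum>k<n. (\<Sum>l<n. g k l * b ^ l) * a ^ k))
      = a ^ i * b ^ j * peval n g a b"
    unfolding peval_def by (simp add: sum_distrib_left sum_distrib_right mult_ac)
  show ?thesis
    by (rule cong_trans[OF cong_eq_chain[OF e1 c2 e3] cong_eq_chain[OF refl c4 e5]])
qed

lemma peval_pmul: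
  fixes a b :: int
  assumes "[a ^ n = 1] (mod M)" "[b ^ n = 1] (mod M)"
  shows "[peval n (pmul n f g) a b = peval n f a b * peval n g a b] (mod M)"
proof -
  have e1: "peval n (pmul n f g) a b = (\<Sum>i<n. \<Sum>j<n. \<Sum>k<n. \<Sum>l<n.
      (f i j * g ((k + n - i) mod n) ((l + n - j) mod n)) * a ^ k * b ^ l)"
    unfolding peval_def pmul_def by (rule pmul_swap)
  have e2: "(\<Sum>i<n. \<Sum>j<n. \<Sum>k<n. \<Sum>l<n.
      (f i j * g ((k + n - i) mod n) ((l + n - j) mod n)) * a ^ k * b ^ l)
     = (\<Sum>i<n. \<Sum>j<n. f i j * (\<Sum>k<n. \<Sum>l<n.
      g ((k + n - i) mod n) ((l + n - j) mod n) * a ^ k * b ^ l))"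
    by (simp add: sum_distrib_left mult_ac)
  have c3: "[(\<Sum>i<n. \<Sum>j<n. f i j * (\<Sum>k<n. \<Sum>l<n.
      g ((k + n - i) mod n) ((l + n - j) mod n) * a ^ k * b ^ l))
     = (\<Sum>i<n. \<Sum>j<n. f i j * (a ^ i * b ^ j * peval n g a b))] (mod M)"
  proof (rule cong_sum, rule cong_sum, rule cong_mult[OF cong_refl])
    fix i j assume "i \<in> {..<n}" "j \<in> {..<n}"
    thus "[(\<Sum>k<n. \<Sum>l<n. g ((k + n - i) mod n) ((l + n - j) mod n) * a ^ k * b ^ l)
       = a ^ i * b ^ j * peval n g a b] (mod M)"
      by (intro shift2 assms) auto
  qed
  have e4: "(\<Sum>i<n. \<Sum>j<n. f i j * (a ^ i * b ^ j * peval n g a b)) = peval n f a b * peval n g a b"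
    unfolding peval_def[of n f] by (simp add: sum_distrib_left mult_ac)
  show ?thesis using cong_eq_chain[OF e1[unfolded e2] c3 e4] .
qed


lemma geom_zero:
  fixes a a' :: int
  assumes q: "prime q" and "[a ^ n = 1] (mod int q)" "[a' ^ n = 1] (mod int q)"
    and "a \<in> {0..<int q}" "a' \<in> {0..<int q}" "a \<noteq> a'"
  shows "[(\<Sum>k<n. a ^ (n - Suc k) * a' ^ k) = 0] (mod int q)"
proof -
  have "a' ^ n - a ^ n = (a' - a) * (\<Sum>k<n. a ^ (n - Suc k) * a' ^ k)"
    by (rule power_diff_sumr2)
  moreover have "[a' ^ n - a ^ n = 1 - 1] (mod int q)"
    using assms by (intro cong_diff) auto
  ultimately have "int q dvd (a' - a) * (\<Sum>k<n. a ^ (n - Suc k) * a' ^ k)"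
    by (simp add: cong_0_iff)
  moreover have "\<not> int q dvd (a' - a)"
  proof
    assume "int q dvd (a' - a)"
    then obtain t where t: "a' - a = int q * t" by (auto elim: dvdE)
    have "t \<noteq> 0" using t assms(6) by auto
    hence "\<bar>a' - a\<bar> \<ge> int q" unfolding t using q by (simp add: abs_mult prime_gt_0_nat)
    thus False using assms(4,5) by auto
  qed
  moreover have "prime (int q)" using q by simp
  ultimately show ?thesis by (simp add: cong_0_iff prime_dvd_mult_iff)
qed

lemma geom_same:
  fixes a :: int
  shows "(\<Sum>k<n. a ^ (n - Suc k) * a ^ k) = int n * a ^ (n - 1)"
proof -
  have "(\<Sum>k<n. a ^ (n - Suc k) * a ^ k) = (\<Sum>k<n. a ^ (n - 1))"
    by (intro sum.cong refl) (auto simp flip: power_add)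
  thus ?thesis by simp
qed


lemma peval_lam:
  assumes q: "prime q" and cop: "coprime n q" and n0: "n > 0"
    and ab: "(a, b) \<in> Eset n q" and ab': "(a', b') \<in> Eset n q"
  shows "[peval n (lam n q a b) a' b' = (if a = a' \<and> b = b' then 1 else 0)] (mod int q)"
proof -
  define m where "m = modular_inverse (int q) (int n)"
  define SA where "SA = (\<Sum>k<n. a ^ (n - Suc k) * a' ^ k)"
  define SB where "SB = (\<Sum>l<n. b ^ (n - Suc l) * b' ^ l)"
  have E: "a \<in> {0..<int q}" "b \<in> {0..<int q}" "[a ^ n = 1] (mod int q)" "[b ^ n = 1] (mod int q)"
          "a' \<in> {0..<int q}" "b' \<in> {0..<int q}" "[a' ^ n = 1] (mod int q)" "[b' ^ n = 1] (mod int q)"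
    using ab ab' unfolding Eset_def by auto
  have c1: "[peval n (lam n q a b) a' b' =
      (\<Sum>k<n. \<Sum>l<n. (a * b * m^2) * (a ^ (n - Suc k) * a' ^ k) * (b ^ (n - Suc l) * b' ^ l))] (mod int q)"
    unfolding peval_def lam_def m_def[symmetric]
  proof (intro cong_sum)
    fix k l
    have "[(a * b * m\<^sup>2 * a ^ (n - 1 - k) * b ^ (n - 1 - l)) mod int q * a' ^ k * b' ^ l
         = (a * b * m\<^sup>2 * a ^ (n - 1 - k) * b ^ (n - 1 - l)) * a' ^ k * b' ^ l] (mod int q)"
      by (intro cong_mult cong_refl) (simp add: cong_def)
    also have "(a * b * m\<^sup>2 * a ^ (n - 1 - k) * b ^ (n - 1 - l)) * a' ^ k * b' ^ l
       = (a * b * m^2) * (a ^ (n - Suc k) * a' ^ k) * (b ^ (n - Suc l) * b' ^ l)"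
      by (simp add: mult_ac)
    finally show "[(a * b * m\<^sup>2 * a ^ (n - 1 - k) * b ^ (n - 1 - l)) mod int q * a' ^ k * b' ^ l
         = (a * b * m^2) * (a ^ (n - Suc k) * a' ^ k) * (b ^ (n - Suc l) * b' ^ l)] (mod int q)" .
  qed
  have e2: "(\<Sum>k<n. \<Sum>l<n. (a * b * m^2) * (a ^ (n - Suc k) * a' ^ k) * (b ^ (n - Suc l) * b' ^ l))
      = (a * b * m^2) * SA * SB"
    unfolding SA_def SB_def by (simp add: sum_distrib_left sum_distrib_right mult_ac)
  have c: "[peval n (lam n q a b) a' b' = (a * b * m^2) * SA * SB] (mod int q)"
    using c1 e2 by simp
  show ?thesis
  proof (cases "a = a' \<and> b = b'")
    case True
    have "SA = int n * a ^ (n - 1)" "SB = int n * b ^ (n - 1)"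
      unfolding SA_def SB_def using True geom_same by auto
    hence h1: "(a * b * m^2) * SA * SB = (m * int n)^2 * (a * a ^ (n - 1)) * (b * b ^ (n - 1))"
      by (simp add: power2_eq_square mult_ac)
    have h2: "a * a ^ (n - 1) = a ^ n" "b * b ^ (n - 1) = b ^ n"
      using n0 by (simp_all add: power_eq_if)
    have "(a * b * m^2) * SA * SB = (m * int n)^2 * a ^ n * b ^ n" unfolding h1 h2[symmetric] by simp
    moreover have "[(m * int n)^2 * a ^ n * b ^ n = 1^2 * 1 * 1] (mod int q)"
    proof (intro cong_mult cong_pow E)
      show "[m * int n = 1] (mod int q)" unfolding m_def
        by (rule cong_modular_inverse2) (use cop in \<open>simp add: coprime_int_iff\<close>)
    qed
    ultimately show ?thesis using c True by (simp add: cong_trans)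
  next
    case False
    have "[SA = 0] (mod int q) \<or> [SB = 0] (mod int q)"
    proof (cases "a = a'")
      case True
      hence "b \<noteq> b'" using False by simp
      thus ?thesis unfolding SB_def using geom_zero[OF q E(4) E(8) E(2) E(6)] by simp
    next
      case False
      thus ?thesis unfolding SA_def using geom_zero[OF q E(3) E(7) E(1) E(5)] by simp
    qed
    hence z0: "[(a * b * m^2) * SA * SB = 0] (mod int q)"
      by (metis cong_mult_rcancel_nat cong_scalar_left cong_scalar_right mult_zero_left mult_zero_right)
    have z: "(if a = a' \<and> b = b' then 1 else 0) = (0::int)" using False by (simp only: if_False)
    from cong_trans[OF c z0] show ?thesis unfolding z .
  qed
qed


lemma finite_Eset: "finite (Eset n q)"
proof -
  have "Eset n q \<subseteq> {0..<int q} \<times> {0..<int q}" unfolding Eset_def by auto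
  thus ?thesis by (rule finite_subset) auto
qed

lemma sum_swap3:
  fixes X :: "'e \<Rightarrow> nat \<Rightarrow> nat \<Rightarrow> int"
  shows "(\<Sum>k<n. \<Sum>l<n. (\<Sum>e\<in>T. X e k l) * A k * B l) = (\<Sum>e\<in>T. \<Sum>k<n. \<Sum>l<n. X e k l * A k * B l)"
proof -
  have "(\<Sum>k<n. \<Sum>l<n. (\<Sum>e\<in>T. X e k l) * A k * B l) = (\<Sum>k<n. \<Sum>l<n. \<Sum>e\<in>T. X e k l * A k * B l)"
    by (simp only: sum_distrib_right)
  also have "\<dots> = (\<Sum>k<n. \<Sum>e\<in>T. \<Sum>l<n. X e k l * A k * B l)"
    by (rule sum.cong[OF refl], rule sum.swap)
  also have "\<dots> = (\<Sum>e\<in>T. \<Sum>k<n. \<Sum>l<n. X e k l * A k * B l)"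
    by (rule sum.swap)
  finally show ?thesis .
qed

lemma peval_sigma:
  assumes q: "prime q" and cop: "coprime n q" and n0: "n > 0"
    and T: "T \<subseteq> Eset n q" and ab': "(a', b') \<in> Eset n q"
  shows "[peval n (sigma n q T c) a' b' = (if (a', b') \<in> T then c (a', b') else 0)] (mod int q)"
proof -
  have fT: "finite T" using T finite_Eset finite_subset by blast
  have sd: "sigma n q T c k l = (\<Sum>e\<in>T. c e * lam n q (fst e) (snd e) k l) mod int q" for k l
    unfolding sigma_def by (simp add: case_prod_unfold)
  have c1: "[peval n (sigma n q T c) a' b' =
     (\<Sum>k<n. \<Sum>l<n. (\<Sum>e\<in>T. c e * lam n q (fst e) (snd e) k l) * a' ^ k * b' ^ l)] (mod int q)"
    unfolding peval_def sd by (intro cong_sum cong_mult cong_refl) (simp add: cong_def)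
  have e2: "(\<Sum>k<n. \<Sum>l<n. (\<Sum>e\<in>T. c e * lam n q (fst e) (snd e) k l) * a' ^ k * b' ^ l)
     = (\<Sum>e\<in>T. c e * peval n (lam n q (fst e) (snd e)) a' b')"
    unfolding sum_swap3 peval_def by (simp add: sum_distrib_left mult_ac)
  have c3: "[(\<Sum>e\<in>T. c e * peval n (lam n q (fst e) (snd e)) a' b')
      = (\<Sum>e\<in>T. c e * (if e = (a', b') then 1 else 0))] (mod int q)"
  proof (rule cong_sum, rule cong_mult[OF cong_refl])
    fix e assume "e \<in> T"
    hence eE: "(fst e, snd e) \<in> Eset n q" using T by auto
    show "[peval n (lam n q (fst e) (snd e)) a' b' = (if e = (a', b') then 1 else 0)] (mod int q)"
      using peval_lam[OF q cop n0 eE ab'] by (simp add: prod_eq_iff)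
  qed
  have e4: "(\<Sum>e\<in>T. c e * (if e = (a', b') then 1 else 0)) = (if (a', b') \<in> T then c (a', b') else 0)"
    using fT by (simp add: if_distrib[of "\<lambda>x. c _ * x"] sum.delta' cong: if_cong)
  show ?thesis using cong_eq_chain[OF refl cong_trans[OF c1[unfolded e2] c3] e4] .
qed


lemma root_of_unity:
  assumes q: "prime q" and nd: "n dvd (q - 1)" and n0: "n > 0"
  obtains w :: int where "\<And>s. [w ^ s = 1] (mod int q) \<longleftrightarrow> n dvd s"
proof -
  obtain g where g: "residue_primroot q g" using prime_primitive_root_exists[OF prime_gt_1_nat[OF q] q] by blast
  have ordg: "ord q g = q - 1" using g q by (simp add: residue_primroot_def totient_prime)
  define d where "d = (q - 1) div n"
  have qd: "q - 1 = n * d" using nd unfolding d_def by simp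
  have q1: "q - 1 > 0" using prime_gt_1_nat[OF q] by simp
  hence d0: "d > 0" using qd by (cases "d = 0") auto
  have "[(int g ^ d) ^ s = 1] (mod int q) \<longleftrightarrow> n dvd s" for s
  proof -
    have "(int g ^ d) ^ s = int (g ^ (d * s))" by (simp add: power_mult)
    hence "[(int g ^ d) ^ s = 1] (mod int q) \<longleftrightarrow> [int (g ^ (d * s)) = int 1] (mod int q)" by simp
    also have "\<dots> \<longleftrightarrow> [g ^ (d * s) = 1] (mod q)" by (rule cong_int_iff)
    also have "\<dots> \<longleftrightarrow> n * d dvd d * s" using ord_divides[of g "d * s" q] ordg qd by simp
    also have "\<dots> \<longleftrightarrow> n dvd s" using d0 by (simp add: mult.commute)
    finally show ?thesis .
  qed
  thus ?thesis using that by blast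
qed

lemma geo_roots:
  fixes w :: int
  assumes q: "prime q" and w: "\<And>s. [w ^ s = 1] (mod int q) \<longleftrightarrow> n dvd s"
  shows "[(\<Sum>u<n. (w ^ m) ^ u) = (if n dvd m then int n else 0)] (mod int q)"
proof (cases "n dvd m")
  case True
  hence "[w ^ m = 1] (mod int q)" using w by simp
  hence "[(\<Sum>u<n. (w ^ m) ^ u) = (\<Sum>u<n. 1 ^ u)] (mod int q)"
    by (intro cong_sum cong_pow)
  thus ?thesis using True by simp
next
  case False
  have "(w ^ m) ^ n - 1 = (w ^ m - 1) * (\<Sum>u<n. (w ^ m) ^ u)" by (rule power_diff_1_eq)
  moreover have "[(w ^ m) ^ n = 1] (mod int q)" using w by (simp flip: power_mult)
  ultimately have "int q dvd (w ^ m - 1) * (\<Sum>u<n. (w ^ m) ^ u)"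
    by (simp add: cong_iff_dvd_diff)
  moreover have "\<not> int q dvd (w ^ m - 1)" using w False by (simp add: cong_iff_dvd_diff)
  moreover have "prime (int q)" using q by simp
  ultimately show ?thesis using False by (simp add: cong_0_iff prime_dvd_mult_iff)
qed

lemma swap4:
  fixes X :: "nat \<Rightarrow> nat \<Rightarrow> nat \<Rightarrow> nat \<Rightarrow> int"
  shows "(\<Sum>s<n. \<Sum>u<n. \<Sum>k<n. \<Sum>l<n. X s u k l) = (\<Sum>k<n. \<Sum>l<n. \<Sum>s<n. \<Sum>u<n. X s u k l)"
proof -
  have "(\<Sum>s<n. \<Sum>u<n. \<Sum>k<n. \<Sum>l<n. X s u k l) = (\<Sum>s<n. \<Sum>k<n. \<Sum>u<n. \<Sum>l<n. X s u k l)"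
    by (rule sum.cong[OF refl], rule sum.swap)
  also have "\<dots> = (\<Sum>k<n. \<Sum>s<n. \<Sum>u<n. \<Sum>l<n. X s u k l)" by (rule sum.swap)
  also have "\<dots> = (\<Sum>k<n. \<Sum>s<n. \<Sum>l<n. \<Sum>u<n. X s u k l)"
    by (rule sum.cong[OF refl], rule sum.cong[OF refl], rule sum.swap)
  also have "\<dots> = (\<Sum>k<n. \<Sum>l<n. \<Sum>s<n. \<Sum>u<n. X s u k l)"
    by (rule sum.cong[OF refl], rule sum.swap)
  finally show ?thesis .
qed

lemma peval_cong_pt:
  assumes "[x = x'] (mod M)" "[y = y'] (mod M)"
  shows "[peval n f x y = peval n f x' y'] (mod M)"
  unfolding peval_def using assms by (intro cong_sum cong_mult cong_pow cong_refl)

lemma pw_lemma: "((w::int) ^ s) ^ a * (w ^ s) ^ b = (w ^ (b + a)) ^ s"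
proof -
  have "(w ^ s) ^ a * (w ^ s) ^ b = (w ^ s) ^ (a + b)" by (simp add: power_add)
  also have "\<dots> = w ^ (s * (a + b))" by (simp add: power_mult)
  also have "\<dots> = w ^ ((b + a) * s)" by (simp add: mult.commute add.commute)
  also have "\<dots> = (w ^ (b + a)) ^ s" by (simp add: power_mult)
  finally show ?thesis .
qed

lemma dvd_shift_iff:
  fixes k n k0 :: nat
  assumes "k < n" "k0 < n"
  shows "n dvd (k + (n - k0)) \<longleftrightarrow> k = k0"
proof
  assume h: "n dvd (k + (n - k0))"
  have "k + (n - k0) > 0" "k + (n - k0) < 2 * n" using assms by auto
  moreover obtain t where t: "k + (n - k0) = n * t" using h by (auto elim: dvdE)
  ultimately have "t \<noteq> 0" by auto
  moreover have "t < 2"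
  proof (rule ccontr)
    assume "\<not> t < 2"
    hence "n * 2 \<le> n * t" by simp
    thus False using t \<open>k + (n - k0) < 2 * n\<close> by simp
  qed
  ultimately have "t = 1" by simp
  thus "k = k0" using t assms by simp
qed (use assms in simp)

lemma inj_eval:
  assumes q: "prime q" and n: "prime n" and nd: "n dvd (q - 1)" and cop: "coprime n q"
    and Z: "\<forall>e\<in>Eset n q. [peval n f (fst e) (snd e) = 0] (mod int q)"
    and k0: "k0 < n" and l0: "l0 < n"
  shows "[f k0 l0 = 0] (mod int q)"
proof -
  have n0: "n > 0" using n prime_gt_0_nat by blast
  obtain w :: int where w: "\<And>s. [w ^ s = 1] (mod int q) \<longleftrightarrow> n dvd s"
    using root_of_unity[OF q nd n0] by blast
  have q0: "int q > 0" using q prime_gt_0_nat by simp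
  have Zw: "[peval n f (w ^ s) (w ^ u) = 0] (mod int q)" for s u
  proof -
    have pt: "[(w ^ s mod int q) ^ n = 1] (mod int q)" for s
    proof -
      have "[(w ^ s mod int q) ^ n = (w ^ s) ^ n] (mod int q)" by (intro cong_pow) (simp add: cong_def)
      moreover have "(w ^ s) ^ n = w ^ (s * n)" by (simp add: power_mult)
      moreover have "[w ^ (s * n) = 1] (mod int q)" using w by simp
      ultimately show ?thesis by (metis (no_types) cong_trans)
    qed
    have "(w ^ s mod int q, w ^ u mod int q) \<in> Eset n q"
      unfolding Eset_def using pt q0 by auto
    hence z1: "[peval n f (w ^ s mod int q) (w ^ u mod int q) = 0] (mod int q)" using Z by auto
    have z2: "[peval n f (w ^ s mod int q) (w ^ u mod int q) = peval n f (w ^ s) (w ^ u)] (mod int q)"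
      by (intro peval_cong_pt) (simp_all add: cong_def)
    show ?thesis by (rule cong_trans[OF cong_sym[OF z2] z1])
  qed
  define S where "S = (\<Sum>s<n. \<Sum>u<n. ((w ^ s) ^ (n - k0) * (w ^ u) ^ (n - l0)) * peval n f (w ^ s) (w ^ u))"
  have S0: "[S = 0] (mod int q)"
  proof -
    have "[S = (\<Sum>s<n. \<Sum>u<n. ((w ^ s) ^ (n - k0) * (w ^ u) ^ (n - l0)) * 0)] (mod int q)"
      unfolding S_def by (intro cong_sum cong_mult cong_refl Zw)
    thus ?thesis by simp
  qed
  have eS1: "S = (\<Sum>s<n. \<Sum>u<n. \<Sum>k<n. \<Sum>l<n.
      f k l * ((w ^ s) ^ (n - k0) * (w ^ s) ^ k) * ((w ^ u) ^ (n - l0) * (w ^ u) ^ l))"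
    unfolding S_def peval_def by (simp add: sum_distrib_left mult_ac)
  also have "\<dots> = (\<Sum>s<n. \<Sum>u<n. \<Sum>k<n. \<Sum>l<n.
      f k l * (w ^ (k + (n - k0))) ^ s * (w ^ (l + (n - l0))) ^ u)"
    by (simp only: pw_lemma)
  also have "\<dots> = (\<Sum>k<n. \<Sum>l<n. \<Sum>s<n. \<Sum>u<n.
      f k l * (w ^ (k + (n - k0))) ^ s * (w ^ (l + (n - l0))) ^ u)"
    by (rule swap4)
  also have "\<dots> = (\<Sum>k<n. \<Sum>l<n. f k l * (\<Sum>s<n. (w ^ (k + (n - k0))) ^ s)
                                        * (\<Sum>u<n. (w ^ (l + (n - l0))) ^ u))"
    by (simp add: sum_distrib_left sum_distrib_right mult_ac)
  finally have eS: "S = \<dots>" .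
  have c2: "[(\<Sum>k<n. \<Sum>l<n. f k l * (\<Sum>s<n. (w ^ (k + (n - k0))) ^ s)
                                        * (\<Sum>u<n. (w ^ (l + (n - l0))) ^ u))
      = (\<Sum>k<n. \<Sum>l<n. f k l * (if k = k0 then int n else 0) * (if l = l0 then int n else 0))] (mod int q)"
  proof (intro cong_sum cong_mult cong_refl)
    fix k l assume "k \<in> {..<n}" "l \<in> {..<n}"
    thus "[(\<Sum>s<n. (w ^ (k + (n - k0))) ^ s) = (if k = k0 then int n else 0)] (mod int q)"
         "[(\<Sum>u<n. (w ^ (l + (n - l0))) ^ u) = (if l = l0 then int n else 0)] (mod int q)"
      using geo_roots[OF q w, of "k + (n - k0)"] geo_roots[OF q w, of "l + (n - l0)"]
        dvd_shift_iff[OF _ k0, of k] dvd_shift_iff[OF _ l0, of l] by auto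
  qed
  have e3: "(\<Sum>k<n. \<Sum>l<n. f k l * (if k = k0 then int n else 0) * (if l = l0 then int n else 0))
       = f k0 l0 * int n * int n"
  proof -
    have inner: "(\<Sum>l<n. f k l * x * (if l = l0 then int n else 0)) = f k l0 * x * int n" for k x
    proof -
      have "(\<Sum>l<n. f k l * x * (if l = l0 then int n else 0)) = (\<Sum>l<n. if l = l0 then f k l0 * x * int n else 0)"
        by (intro sum.cong refl) auto
      thus ?thesis using l0 by simp
    qed
    have "(\<Sum>k<n. \<Sum>l<n. f k l * (if k = k0 then int n else 0) * (if l = l0 then int n else 0))
        = (\<Sum>k<n. f k l0 * (if k = k0 then int n else 0) * int n)"
      by (simp only: inner)
    also have "\<dots> = (\<Sum>k<n. if k = k0 then f k0 l0 * int n * int n else 0)"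
      by (intro sum.cong refl) auto
    also have "\<dots> = f k0 l0 * int n * int n" using k0 by simp
    finally show ?thesis .
  qed
  have "[f k0 l0 * int n * int n = 0] (mod int q)"
    using cong_trans[OF cong_sym[OF c2[unfolded e3]], of 0] S0 eS by simp
  hence "int q dvd f k0 l0 * (int n * int n)" by (simp add: cong_0_iff mult.assoc)
  moreover have "\<not> int q dvd int n"
  proof
    assume "int q dvd int n"
    hence "q dvd n" by simp
    hence "q dvd gcd n q" by simp
    thus False using cop q by (simp add: prime_gt_1_nat)
  qed
  moreover have "prime (int q)" using q by simp
  ultimately show ?thesis by (simp add: cong_0_iff prime_dvd_mult_iff)
qed


lemma comb4:
  assumes "[peval n P1 a b = v1] (mod M)" "[peval n P2 a b = v2] (mod M)"
          "[peval n P3 a b = v3] (mod M)" "[peval n P4 a b = v4] (mod M)"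
  shows "[peval n (psub (padd (padd P1 P2) P3) P4) a b = v1 + v2 + v3 - v4] (mod M)"
  unfolding peval_psub peval_padd using assms by (intro cong_add cong_diff)

lemma pmul_zero:
  fixes a b :: int
  assumes "[a ^ n = 1] (mod M)" "[b ^ n = 1] (mod M)" "[peval n y a b = 0] (mod M)"
  shows "[peval n (pmul n x y) a b = 0] (mod M)"
proof -
  have "[peval n x a b * peval n y a b = peval n x a b * 0] (mod M)"
    by (intro cong_mult cong_refl assms(3))
  thus ?thesis using cong_trans[OF peval_pmul[OF assms(1,2)]] by simp
qed

lemma pmul_const:
  fixes a b :: int
  assumes "[a ^ n = 1] (mod M)" "[b ^ n = 1] (mod M)" "n > 0"
  shows "[peval n (pmul n (pconst w) y) a b = w * peval n y a b] (mod M)"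
  using peval_pmul[OF assms(1,2), of "pconst w" y] peval_pconst[OF assms(3)] by simp

lemma qmul_eval_zero:
  fixes a b :: int
  assumes "[a ^ n = 1] (mod M)" "[b ^ n = 1] (mod M)"
    and Z: "\<forall>t<4. [peval n (qc B t) a b = 0] (mod M)" and t: "t < 4"
  shows "[peval n (qc (qmul n A B) t) a b = 0] (mod M)"
proof -
  obtain a0 a1 a2 a3 where A: "A = Quat a0 a1 a2 a3" by (cases A)
  obtain b0 b1 b2 b3 where B: "B = Quat b0 b1 b2 b3" by (cases B)
  have z: "[peval n b0 a b = 0] (mod M)" "[peval n b1 a b = 0] (mod M)"
          "[peval n b2 a b = 0] (mod M)" "[peval n b3 a b = 0] (mod M)"
    using Z B by (auto dest: spec[of _ 0] spec[of _ 1] spec[of _ 2] spec[of _ 3])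
  have pz: "[peval n (pmul n x y) a b = 0] (mod M)" if "[peval n y a b = 0] (mod M)" for x y
    by (rule pmul_zero[OF assms(1,2) that])
  have "t = 0 \<or> t = 1 \<or> t = 2 \<or> t = 3" using t by auto
  thus ?thesis
    using comb4[OF pz pz pz pz, OF z(1) z(2) z(3) z(4)]
          comb4[OF pz pz pz pz, OF z(2) z(1) z(3) z(4)]
          comb4[OF pz pz pz pz, OF z(3) z(1) z(4) z(2)]
          comb4[OF pz pz pz pz, OF z(4) z(1) z(3) z(2)]
    unfolding A B by auto
qed

lemma theta_eval:
  fixes a b :: int
  assumes "[a ^ n = 1] (mod M)" "[b ^ n = 1] (mod M)" "n > 0" "t < 4"
  shows "[peval n (qc (qmul n (qconst W) (qscal s)) t) a b = qc W t * peval n s a b] (mod M)"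
proof -
  obtain w0 w1 w2 w3 where W: "W = Quat w0 w1 w2 w3" by (cases W)
  have pc: "[peval n (pmul n (pconst w) y) a b = w * peval n y a b] (mod M)" for w y
    by (rule pmul_const[OF assms(1,2,3)])
  have p0: "peval n (pconst 0) a b = 0" by (rule peval_pconst[OF assms(3)])
  have "t = 0 \<or> t = 1 \<or> t = 2 \<or> t = 3" using assms(4) by auto
  thus ?thesis
    using comb4[OF pc pc pc pc, of w0 s w1 "pconst 0" w2 "pconst 0" w3 "pconst 0"]
          comb4[OF pc pc pc pc, of w0 "pconst 0" w1 s w3 "pconst 0" w2 "pconst 0"]
          comb4[OF pc pc pc pc, of w0 "pconst 0" w2 s w1 "pconst 0" w3 "pconst 0"]
          comb4[OF pc pc pc pc, of w0 "pconst 0" w3 s w1 "pconst 0" w2 "pconst 0"]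
    unfolding W qscal_def p0 by auto
qed

lemma qc_qadd: "qc (qadd A B) t = padd (qc A t) (qc B t)"
  by (cases A; cases B) simp

lemma qeq_eval:
  assumes "qeq_mod n q A B" "t < 4"
  shows "[peval n (qc A t) a b = peval n (qc B t) a b] (mod int q)"
  using assms unfolding qeq_mod_def peq_mod_def by (intro peval_cong) auto

theorem lemma7:
  fixes n p q :: nat
    and F G Finv Htil :: "rpoly quat"
    and W :: "int quat"
    and c :: "int \<times> int \<Rightarrow> int"
  assumes "prime n" and "prime p" and "prime q" and "p \<noteq> q"
    and "coprime p q" and "coprime n q" and "n dvd (q - 1)"
    and "qternary n F" and "qternary n G"
    and "Tset n q G \<noteq> {}"
    and "{(a, b) \<in> Eset n q. [peval n (qnorm n F) a b = 0] (mod int q)} \<subseteq> Tset n q G"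
    and "\<forall>e\<in>Tset n q G. \<not> [c e = 0] (mod int q)"
    and "qeq_modJ n q (sigma n q (Tset n q G) c) (qmul n F Finv) qone"
    and "qeq_modJ n q (sigma n q (Tset n q G) c) (qmul n Finv F) qone"
    and "linvertible q W"
    and "\<forall>t<4. \<not> [qc W t = 0] (mod int q)"
    and "qeq_mod n q Htil
           (qadd (qmul n Finv G) (qmul n (qconst W) (qscal (sigma n q (Tset n q G) c))))"
  shows "\<forall>\<tau>'. (\<exists>F' \<alpha>'. qeq_mod n q (qmul n F F') (qadd qone (qmul n \<alpha>' \<tau>'))
                    \<and> qeq_mod n q (qmul n F' F) (qadd qone (qmul n \<alpha>' \<tau>'))
                    \<and> qeq_mod n q Htil (qadd (qmul n F' G) \<tau>'))
               \<and> \<not> qeq_mod n q \<tau>' (qmul n (qconst W) (qscal (sigma n q (Tset n q G) c)))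
          \<longrightarrow> rho_weight n q \<tau>' > 4 * card (Tset n q G)"
proof (intro allI impI)
  fix \<tau>' :: "rpoly quat"
  assume H: "(\<exists>F' \<alpha>'. qeq_mod n q (qmul n F F') (qadd qone (qmul n \<alpha>' \<tau>'))
                    \<and> qeq_mod n q (qmul n F' F) (qadd qone (qmul n \<alpha>' \<tau>'))
                    \<and> qeq_mod n q Htil (qadd (qmul n F' G) \<tau>'))
               \<and> \<not> qeq_mod n q \<tau>' (qmul n (qconst W) (qscal (sigma n q (Tset n q G) c)))"
  define T where "T = Tset n q G"
  define E where "E = Eset n q"
  define \<sigma> where "\<sigma> = sigma n q T c"
  define \<theta> where "\<theta> = qmul n (qconst W) (qscal \<sigma>)"
  obtain F' where HF: "qeq_mod n q Htil (qadd (qmul n F' G) \<tau>')" using H by blast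
  have Hne: "\<not> qeq_mod n q \<tau>' \<theta>" using H unfolding \<theta>_def \<sigma>_def T_def by blast
  have Hth: "qeq_mod n q Htil (qadd (qmul n Finv G) \<theta>)" using assms(17) unfolding \<theta>_def \<sigma>_def T_def .
  have q: "prime q" and nprime: "prime n" and cop: "coprime n q" and nd: "n dvd (q - 1)"
    using assms by auto
  have n0: "n > 0" using nprime prime_gt_0_nat by blast
  have primeQ: "prime (int q)" using q by simp
  have TE: "T \<subseteq> E" unfolding T_def E_def Tset_def by auto
  have fE: "finite E" unfolding E_def by (rule finite_Eset)
  have fT: "finite T" using TE fE finite_subset by blast
  have Epow: "[fst e ^ n = 1] (mod int q)" "[snd e ^ n = 1] (mod int q)" if "e \<in> E" for e
    using that unfolding E_def Eset_def by auto
  have Gz: "\<forall>t<4. [peval n (qc G t) (fst e) (snd e) = 0] (mod int q)" if "e \<in> T" for e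
    using that unfolding T_def Tset_def by auto
  have th_eval: "[peval n (qc \<theta> t) (fst e) (snd e) = qc W t * (if e \<in> T then c e else 0)] (mod int q)"
    if "e \<in> E" "t < 4" for e t
  proof -
    have "[peval n (qc \<theta> t) (fst e) (snd e) = qc W t * peval n \<sigma> (fst e) (snd e)] (mod int q)"
      unfolding \<theta>_def by (rule theta_eval[OF Epow[OF that(1)] n0 that(2)])
    moreover have "[peval n \<sigma> (fst e) (snd e) = (if (fst e, snd e) \<in> T then c (fst e, snd e) else 0)] (mod int q)"
      unfolding \<sigma>_def by (rule peval_sigma[OF q cop n0 TE[unfolded E_def]]) (use that in \<open>simp add: E_def\<close>)
    ultimately show ?thesis by (simp add: cong_trans cong_mult cong_refl)
  qed
  have tauT: "[peval n (qc \<tau>' t) (fst e) (snd e) = peval n (qc \<theta> t) (fst e) (snd e)] (mod int q)"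
    if "e \<in> T" "t < 4" for e t
  proof -
    have eE: "e \<in> E" using that TE by auto
    have z1: "[peval n (qc (qmul n F' G) t) (fst e) (snd e) = 0] (mod int q)"
      by (rule qmul_eval_zero[OF Epow[OF eE] Gz[OF that(1)] that(2)])
    have z2: "[peval n (qc (qmul n Finv G) t) (fst e) (snd e) = 0] (mod int q)"
      by (rule qmul_eval_zero[OF Epow[OF eE] Gz[OF that(1)] that(2)])
    have h1: "[peval n (qc Htil t) (fst e) (snd e) =
        peval n (qc (qmul n F' G) t) (fst e) (snd e) + peval n (qc \<tau>' t) (fst e) (snd e)] (mod int q)"
      using qeq_eval[OF HF that(2)] by (simp add: qc_qadd peval_padd)
    have h2: "[peval n (qc Htil t) (fst e) (snd e) =
        peval n (qc (qmul n Finv G) t) (fst e) (snd e) + peval n (qc \<theta> t) (fst e) (snd e)] (mod int q)"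
      using qeq_eval[OF Hth that(2)] by (simp add: qc_qadd peval_padd)
    have "[peval n (qc (qmul n F' G) t) (fst e) (snd e) + peval n (qc \<tau>' t) (fst e) (snd e)
         = 0 + peval n (qc \<tau>' t) (fst e) (snd e)] (mod int q)"
      by (intro cong_add z1 cong_refl)
    moreover have "[peval n (qc (qmul n Finv G) t) (fst e) (snd e) + peval n (qc \<theta> t) (fst e) (snd e)
         = 0 + peval n (qc \<theta> t) (fst e) (snd e)] (mod int q)"
      by (intro cong_add z2 cong_refl)
    ultimately show ?thesis using h1 h2
      by simp (meson cong_sym cong_trans)
  qed
  have tauT_nz: "\<not> [peval n (qc \<tau>' t) (fst e) (snd e) = 0] (mod int q)" if "e \<in> T" "t < 4" for e t
  proof
    assume z: "[peval n (qc \<tau>' t) (fst e) (snd e) = 0] (mod int q)"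
    have eE: "e \<in> E" using that TE by auto
    have "[qc W t * c e = 0] (mod int q)"
      using cong_trans[OF cong_sym[OF tauT[OF that]] z] th_eval[OF eE that(2)] that(1)
      by simp (meson cong_sym cong_trans)
    hence "int q dvd qc W t * c e" by (simp add: cong_0_iff)
    hence "int q dvd qc W t \<or> int q dvd c e" using primeQ by (simp add: prime_dvd_mult_iff)
    moreover have "\<not> [qc W t = 0] (mod int q)" using assms(16) that(2) by auto
    moreover have "\<not> [c e = 0] (mod int q)" using assms(12) that(1) unfolding T_def by auto
    ultimately show False by (simp add: cong_0_iff)
  qed
  obtain t0 where t0: "t0 < 4" "\<not> peq_mod n q (qc \<tau>' t0) (qc \<theta> t0)"
    using Hne unfolding qeq_mod_def by auto
  obtain e0 where e0: "e0 \<in> E"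
    "\<not> [peval n (qc \<tau>' t0) (fst e0) (snd e0) = peval n (qc \<theta> t0) (fst e0) (snd e0)] (mod int q)"
  proof (rule ccontr)
    assume "\<not> thesis"
    hence all: "\<forall>e\<in>E. [peval n (qc \<tau>' t0) (fst e) (snd e) = peval n (qc \<theta> t0) (fst e) (snd e)] (mod int q)"
      using that by blast
    have "\<forall>e\<in>Eset n q. [peval n (psub (qc \<tau>' t0) (qc \<theta> t0)) (fst e) (snd e) = 0] (mod int q)"
      using all unfolding E_def peval_psub by (simp add: cong_iff_dvd_diff)
    hence "[psub (qc \<tau>' t0) (qc \<theta> t0) k l = 0] (mod int q)" if "k < n" "l < n" for k l
      using inj_eval[OF q nprime nd cop _ that] by blast
    hence "peq_mod n q (qc \<tau>' t0) (qc \<theta> t0)"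
      unfolding peq_mod_def psub_def by (simp add: cong_iff_dvd_diff)
    thus False using t0 by simp
  qed
  have e0T: "e0 \<notin> T" using e0 tauT t0(1) by blast
  have th0: "[peval n (qc \<theta> t0) (fst e0) (snd e0) = 0] (mod int q)"
    using th_eval[OF e0(1) t0(1)] e0T by simp
  have tau0: "\<not> [peval n (qc \<tau>' t0) (fst e0) (snd e0) = 0] (mod int q)"
    using e0(2) th0 by (meson cong_sym cong_trans)
  define S where "S = {(t, e). t < (4::nat) \<and> e \<in> Eset n q \<and>
                                    \<not> [peval n (qc \<tau>' t) (fst e) (snd e) = 0] (mod int q)}"
  have wS: "rho_weight n q \<tau>' = card S" unfolding rho_weight_def S_def ..
  have fS: "finite S"
  proof (rule finite_subset)
    show "S \<subseteq> {..<4} \<times> E" unfolding S_def E_def by auto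
    show "finite ({..<4::nat} \<times> E)" using fE by simp
  qed
  have sub: "insert (t0, e0) ({..<4} \<times> T) \<subseteq> S"
    using tauT_nz TE t0(1) e0(1) tau0 unfolding S_def E_def by auto
  have "card (insert (t0, e0) ({..<4::nat} \<times> T)) = Suc (4 * card T)"
    using e0T fT by (simp add: card_cartesian_product)
  hence "Suc (4 * card T) \<le> card S" using card_mono[OF fS sub] by simp
  thus "rho_weight n q \<tau>' > 4 * card (Tset n q G)" using wS unfolding T_def by simp
qed

end
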